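(* Let $X,E$ be Banach spaces, $m\ge2$, and $A\in\mathcal{L}_s(^mX;E)$ a continuous symmetric $m$-linear map, with canonical extension $\tilde A\in\mathcal{L}(^mX'';E'')$. The following are equivalent: (i) $\tilde A$ is symmetric; (ii) $\tilde A$ is weak-star-to-weak-star continuous in each variable; (iii) $i_{E'}'\circ\tilde{\tilde A}=\tilde A\circ(i_{X'}'\times\cdots\times i_{X'}')$ on $X^{iv}\times\cdots\times X^{iv}$; (iv) $\tilde A$ is weak-star-to-weak-star continuous in the second variable; (v) the first two variables of $\tilde A$ commute, i.e. $\tilde A(z_1,z_2,z_3,\dots,z_m)=\tilde A(z_2,z_1,z_3,\dots,z_m)$ for all $z_1,\dots,z_m\in X''$.
   Context: For a continuous $m$-linear map $A:X\times\cdots\times X\to E$, its canonical (Aron–Berner) extension $\tilde A:X''\times\cdots\times X''\to E''$ is $\tilde A(z_1,\dots,z_m)=w^*\text{-}\lim_{\alpha_1}\cdots w^*\text{-}\lim_{\alpha_m}A(x_{\alpha_1},\dots,x_{\alpha_m})$, where $(x_{\alpha_i})\subseteq X$ are nets weak-star converging to $z_i$ and the limits are taken one variable at a time from right to left (values regarded in $E''$). $\tilde{\tilde A}:X^{iv}\times\cdots\times X^{iv}\to E^{iv}$ is the canonical extension of $\tilde A$ in the same way. $i_Y:Y\to Y''$ is the canonical embedding, so $i_{X'}':X^{iv}\to X''$ and $i_{E'}':E^{iv}\to E''$ are the transposes of $i_{X'}$, $i_{E'}$ (restriction maps). *)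

theory Defs
  imports "HOL-Analysis.Analysis"
begin

text \<open>Real Banach spaces are types of class banach; the (topological) dual of X
  is the type of bounded linear maps from X to real, so X'' is the dual of that, etc.
  An m-linear map X \<times> ... \<times> X \<rightarrow> E is modelled as a function on lists of
  length m.\<close>

type_synonym 'a dual = "'a \<Rightarrow>\<^sub>L real"
type_synonym 'a bidual = "('a \<Rightarrow>\<^sub>L real) \<Rightarrow>\<^sub>L real"

definition multilinear_on :: "nat \<Rightarrow> ('a::real_normed_vector list \<Rightarrow> 'e::real_normed_vector) \<Rightarrow> bool" where
  "multilinear_on m A \<longleftrightarrow>
     (\<forall>xs i. length xs = m \<longrightarrow> i < m \<longrightarrow> linear (\<lambda>x. A (xs[i := x])))"

definition bounded_mlin :: "nat \<Rightarrow> ('a::real_normed_vector list \<Rightarrow> 'e::real_normed_vector) \<Rightarrow> bool" where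
  "bounded_mlin m A \<longleftrightarrow>
     (\<exists>C. \<forall>xs. length xs = m \<longrightarrow> norm (A xs) \<le> C * prod_list (map norm xs))"

definition cont_mlin :: "nat \<Rightarrow> ('a::real_normed_vector list \<Rightarrow> 'e::real_normed_vector) \<Rightarrow> bool" where
  "cont_mlin m A \<longleftrightarrow> multilinear_on m A \<and> bounded_mlin m A"

definition symmetric_mlin :: "nat \<Rightarrow> ('a list \<Rightarrow> 'e) \<Rightarrow> bool" where
  "symmetric_mlin m A \<longleftrightarrow>
     (\<forall>xs ys. length xs = m \<longrightarrow> mset ys = mset xs \<longrightarrow> A ys = A xs)"

text \<open>Iterated weak-star limits, right to left, for a scalar form B:
  taking the limit of the last variable x_m \<rightarrow> z_m (weak-star) of
  B(x_1,...,x_{m-1},x_m) gives z_m(x \<mapsto> B(x_1,...,x_{m-1},x)) by the very definition of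
  weak-star convergence, and so on.\<close>
primrec ab_ext_scalar :: "('a::real_normed_vector list \<Rightarrow> real) \<Rightarrow> 'a bidual list \<Rightarrow> real" where
  "ab_ext_scalar B [] = B []"
| "ab_ext_scalar B (z # zs) =
     blinfun_apply z (Blinfun (\<lambda>x. ab_ext_scalar (\<lambda>ys. B (x # ys)) zs))"

definition ab_ext :: "('a::real_normed_vector list \<Rightarrow> 'e::real_normed_vector)
    \<Rightarrow> 'a bidual list \<Rightarrow> 'e bidual" where
  "ab_ext A zs = Blinfun (\<lambda>\<psi>. ab_ext_scalar (\<lambda>xs. blinfun_apply \<psi> (A xs)) zs)"

definition weak_star :: "'a::real_normed_vector bidual topology" where
  "weak_star = pullback_topology UNIV (\<lambda>z \<phi>. blinfun_apply z \<phi>)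
                 (product_topology (\<lambda>_. euclideanreal) UNIV)"

definition can_emb :: "'a::real_normed_vector \<Rightarrow> 'a bidual" where
  "can_emb y = Blinfun (\<lambda>\<phi>. blinfun_apply \<phi> y)"

text \<open>transpose of i_{Y'} : Y' \<rightarrow> Y''', i.e. the map Y^{iv} \<rightarrow> Y'', w \<mapsto> w \<circ> i_{Y'}\<close>
definition emb_transpose :: "'a::real_normed_vector bidual bidual \<Rightarrow> 'a bidual" where
  "emb_transpose w = Blinfun (\<lambda>\<phi>. blinfun_apply w (can_emb \<phi>))"

end

theory Submission
  imports Defs
begin


lemma ab_cong:
  "(\<And>xs. length xs = length zs \<Longrightarrow> B xs = B' xs) \<Longrightarrow> ab_ext_scalar B zs = ab_ext_scalar B' zs"
proof (induction zs arbitrary: B B')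
  case Nil then show ?case by simp
next
  case (Cons z zs)
  have "(\<lambda>x. ab_ext_scalar (\<lambda>ys. B (x # ys)) zs) = (\<lambda>x. ab_ext_scalar (\<lambda>ys. B' (x # ys)) zs)"
    using Cons by (intro ext Cons.IH) auto
  then show ?case by simp
qed

lemma cont_shift:
  fixes B :: "'a::real_normed_vector list \<Rightarrow> 'e::real_normed_vector"
  assumes "cont_mlin (Suc m) B"
  shows "cont_mlin m (\<lambda>ys. B (x # ys))"
proof -
  from assms obtain C where C: "\<forall>xs. length xs = Suc m \<longrightarrow> norm (B xs) \<le> C * prod_list (map norm xs)"
    unfolding cont_mlin_def bounded_mlin_def by blast
  have "multilinear_on m (\<lambda>ys. B (x # ys))"
    unfolding multilinear_on_def
  proof (intro allI impI)
    fix xs :: "'a list" and i assume "length xs = m" "i < m"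
    then have "linear (\<lambda>t. B ((x # xs)[Suc i := t]))"
      using assms \<open>length xs = m\<close> \<open>i < m\<close> unfolding cont_mlin_def multilinear_on_def
      by (metis Suc_less_eq length_Cons)
    then show "linear (\<lambda>t. B (x # xs[i := t]))" by simp
  qed
  moreover have "bounded_mlin m (\<lambda>ys. B (x # ys))"
    unfolding bounded_mlin_def
  proof (rule exI[of _ "C * norm x"], intro allI impI)
    fix xs :: "'a list" assume "length xs = m"
    then show "norm (B (x # xs)) \<le> C * norm x * prod_list (map norm xs)"
      using C[rule_format, of "x # xs"] by (simp add: mult.assoc)
  qed
  ultimately show ?thesis unfolding cont_mlin_def by simp
qed

lemma cont_lin_first:
  fixes B :: "'a::real_normed_vector list \<Rightarrow> 'e::real_normed_vector"
  assumes "cont_mlin (Suc m) B" "length ys = m"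
  shows "linear (\<lambda>x. B (x # ys))"
proof -
  have "linear (\<lambda>t. B ((0 # ys)[0 := t]))"
    using assms unfolding cont_mlin_def multilinear_on_def by (metis length_Cons zero_less_Suc)
  then show ?thesis by simp
qed

lemma cont_bl_first:
  fixes B :: "'a::real_normed_vector list \<Rightarrow> 'e::real_normed_vector"
  assumes "cont_mlin (Suc m) B" "length ys = m"
  shows "bounded_linear (\<lambda>x. B (x # ys))"
proof -
  interpret linear "\<lambda>x. B (x # ys)" using cont_lin_first[OF assms] .
  from assms obtain C where C: "\<forall>xs. length xs = Suc m \<longrightarrow> norm (B xs) \<le> C * prod_list (map norm xs)"
    unfolding cont_mlin_def bounded_mlin_def by blast
  show ?thesis
  proof (rule bounded_linear_intro[where K = "\<bar>C\<bar> * prod_list (map norm ys)"])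
    fix x
    have "norm (B (x # ys)) \<le> C * (norm x * prod_list (map norm ys))" using C[rule_format, of "x # ys"] assms(2) by auto
    also have "\<dots> \<le> \<bar>C\<bar> * (norm x * prod_list (map norm ys))"
      by (intro mult_right_mono mult_nonneg_nonneg prod_list_nonneg) auto
    finally show "norm (B (x # ys)) \<le> norm x * (\<bar>C\<bar> * prod_list (map norm ys))" by (simp add: ac_simps)
  qed (auto simp: add scale)
qed

lemma Blinfun_add:
  "bounded_linear f \<Longrightarrow> bounded_linear g \<Longrightarrow> Blinfun (\<lambda>x. f x + g x) = Blinfun f + Blinfun g"
  by (rule blinfun_eqI) (simp add: bounded_linear_Blinfun_apply bounded_linear_add plus_blinfun.rep_eq)

lemma Blinfun_scale:
  fixes f :: "'a::real_normed_vector \<Rightarrow> real"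
  shows "bounded_linear f \<Longrightarrow> Blinfun (\<lambda>x. c * f x) = c *\<^sub>R Blinfun f"
  by (rule blinfun_eqI) (simp add: bounded_linear_Blinfun_apply bounded_linear_mult_right scaleR_blinfun.rep_eq
      bounded_linear_compose[OF bounded_linear_mult_right])

lemma max0_bound:
  fixes B :: "'a::real_normed_vector list \<Rightarrow> 'e::real_normed_vector"
  assumes "bounded_mlin m B"
  shows "\<exists>C\<ge>0. \<forall>xs. length xs = m \<longrightarrow> norm (B xs) \<le> C * prod_list (map norm xs)"
proof -
  from assms obtain C where C: "\<forall>xs. length xs = m \<longrightarrow> norm (B xs) \<le> C * prod_list (map norm xs)"
    unfolding bounded_mlin_def by blast
  show ?thesis
  proof (intro exI[of _ "max C 0"] conjI allI impI)
    fix xs :: "'a list" assume "length xs = m"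
    then have "norm (B xs) \<le> C * prod_list (map norm xs)" using C by blast
    also have "\<dots> \<le> max C 0 * prod_list (map norm xs)"
      by (intro mult_right_mono prod_list_nonneg) auto
    finally show "norm (B xs) \<le> max C 0 * prod_list (map norm xs)" .
  qed simp
qed

lemma shift_bound:
  fixes B :: "'a::real_normed_vector list \<Rightarrow> 'e::real_normed_vector"
  assumes "\<forall>xs. length xs = Suc n \<longrightarrow> norm (B xs) \<le> C * prod_list (map norm xs)"
  shows "\<forall>xs. length xs = n \<longrightarrow> norm (B (x # xs)) \<le> (C * norm x) * prod_list (map norm xs)"
proof (intro allI impI)
  fix xs :: "'a list" assume "length xs = n"
  then show "norm (B (x # xs)) \<le> (C * norm x) * prod_list (map norm xs)"
    using assms[rule_format, of "x # xs"] by (simp add: mult.assoc)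
qed

lemma ab_main:
  fixes B :: "'a::real_normed_vector list \<Rightarrow> real"
  assumes "cont_mlin (length zs) B"
  shows "(\<forall>C\<ge>0. (\<forall>xs. length xs = length zs \<longrightarrow> \<bar>B xs\<bar> \<le> C * prod_list (map norm xs)) \<longrightarrow>
            \<bar>ab_ext_scalar B zs\<bar> \<le> C * prod_list (map norm zs))
       \<and> (\<forall>B'. cont_mlin (length zs) B' \<longrightarrow>
            ab_ext_scalar (\<lambda>xs. B xs + B' xs) zs = ab_ext_scalar B zs + ab_ext_scalar B' zs)
       \<and> (\<forall>c. ab_ext_scalar (\<lambda>xs. c * B xs) zs = c * ab_ext_scalar B zs)"
  using assms
proof (induction zs arbitrary: B)
  case Nil
  then show ?case by simp
next
  case (Cons z zs)
  have bl: "bounded_linear (\<lambda>x. ab_ext_scalar (\<lambda>ys. B (x # ys)) zs)"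
    if cB: "cont_mlin (Suc (length zs)) B" for B :: "'a list \<Rightarrow> real"
  proof -
    obtain C where C0: "C \<ge> 0" and C: "\<forall>xs. length xs = Suc (length zs) \<longrightarrow> norm (B xs) \<le> C * prod_list (map norm xs)"
      using max0_bound cB unfolding cont_mlin_def by blast
    show ?thesis
    proof (rule bounded_linear_intro[where K = "C * prod_list (map norm zs)"])
      fix x y :: 'a
      have "ab_ext_scalar (\<lambda>ys. B ((x + y) # ys)) zs
          = ab_ext_scalar (\<lambda>ys. B (x # ys) + B (y # ys)) zs"
        by (rule ab_cong) (use linear_add[OF cont_lin_first[OF cB]] in \<open>simp\<close>)
      also have "\<dots> = ab_ext_scalar (\<lambda>ys. B (x # ys)) zs + ab_ext_scalar (\<lambda>ys. B (y # ys)) zs"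
        using Cons.IH[OF cont_shift[OF cB, of x]] cont_shift[OF cB, of y] by blast
      finally show "ab_ext_scalar (\<lambda>ys. B ((x + y) # ys)) zs
          = ab_ext_scalar (\<lambda>ys. B (x # ys)) zs + ab_ext_scalar (\<lambda>ys. B (y # ys)) zs" .
    next
      fix r and x :: 'a
      have "ab_ext_scalar (\<lambda>ys. B ((r *\<^sub>R x) # ys)) zs
          = ab_ext_scalar (\<lambda>ys. r * B (x # ys)) zs"
        by (rule ab_cong) (use linear_scale[OF cont_lin_first[OF cB]] in \<open>simp\<close>)
      also have "\<dots> = r * ab_ext_scalar (\<lambda>ys. B (x # ys)) zs"
        using Cons.IH[OF cont_shift[OF cB, of x]] by blast
      finally show "ab_ext_scalar (\<lambda>ys. B ((r *\<^sub>R x) # ys)) zs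
          = r *\<^sub>R ab_ext_scalar (\<lambda>ys. B (x # ys)) zs" by simp
    next
      fix x :: 'a
      have "\<forall>xs. length xs = length zs \<longrightarrow> \<bar>B (x # xs)\<bar> \<le> (C * norm x) * prod_list (map norm xs)"
        using shift_bound[where B=B and n="length zs" and C=C and x=x] C by simp
      then have "\<bar>ab_ext_scalar (\<lambda>ys. B (x # ys)) zs\<bar> \<le> (C * norm x) * prod_list (map norm zs)"
        using Cons.IH[OF cont_shift[OF cB, of x]] C0 by simp
      then show "norm (ab_ext_scalar (\<lambda>ys. B (x # ys)) zs) \<le> norm x * (C * prod_list (map norm zs))"
        by (simp add: ac_simps)
    qed
  qed
  have cB: "cont_mlin (Suc (length zs)) B" using Cons.prems by simp
  show ?case
  proof (intro conjI allI impI)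
    fix C :: real
    assume C0: "C \<ge> 0" and C: "\<forall>xs. length xs = length (z # zs) \<longrightarrow> \<bar>B xs\<bar> \<le> C * prod_list (map norm xs)"
    have "norm (Blinfun (\<lambda>x. ab_ext_scalar (\<lambda>ys. B (x # ys)) zs)) \<le> C * prod_list (map norm zs)"
    proof (rule norm_blinfun_bound)
      show "0 \<le> C * prod_list (map norm zs)" using C0 by (intro mult_nonneg_nonneg prod_list_nonneg) auto
    next
      fix x :: 'a
      have "\<forall>xs. length xs = length zs \<longrightarrow> \<bar>B (x # xs)\<bar> \<le> (C * norm x) * prod_list (map norm xs)"
        using shift_bound[where B=B and n="length zs" and C=C and x=x] C by simp
      then have "\<bar>ab_ext_scalar (\<lambda>ys. B (x # ys)) zs\<bar> \<le> (C * norm x) * prod_list (map norm zs)"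
        using Cons.IH[OF cont_shift[OF cB, of x]] C0 by simp
      then show "norm (blinfun_apply (Blinfun (\<lambda>x. ab_ext_scalar (\<lambda>ys. B (x # ys)) zs)) x)
          \<le> C * prod_list (map norm zs) * norm x"
        by (simp add: bounded_linear_Blinfun_apply[OF bl[OF cB]] ac_simps)
    qed
    then have "\<bar>ab_ext_scalar B (z # zs)\<bar> \<le> norm z * (C * prod_list (map norm zs))"
      using norm_blinfun[of z "Blinfun (\<lambda>x. ab_ext_scalar (\<lambda>ys. B (x # ys)) zs)"]
      by (simp add: order_trans mult_left_mono)
    then show "\<bar>ab_ext_scalar B (z # zs)\<bar> \<le> C * prod_list (map norm (z # zs))"
      by (simp add: ac_simps)
  next
    fix B' :: "'a list \<Rightarrow> real"
    assume cB': "cont_mlin (length (z # zs)) B'"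
    then have cB'': "cont_mlin (Suc (length zs)) B'" by simp
    have "(\<lambda>x. ab_ext_scalar (\<lambda>ys. B (x # ys) + B' (x # ys)) zs)
        = (\<lambda>x. ab_ext_scalar (\<lambda>ys. B (x # ys)) zs + ab_ext_scalar (\<lambda>ys. B' (x # ys)) zs)"
      using Cons.IH[OF cont_shift[OF cB]] cont_shift[OF cB''] by blast
    then show "ab_ext_scalar (\<lambda>xs. B xs + B' xs) (z # zs) = ab_ext_scalar B (z # zs) + ab_ext_scalar B' (z # zs)"
      by (simp add: Blinfun_add[OF bl[OF cB] bl[OF cB'']] blinfun.add_right)
  next
    fix c :: real
    have "(\<lambda>x. ab_ext_scalar (\<lambda>ys. c * B (x # ys)) zs)
        = (\<lambda>x. c * ab_ext_scalar (\<lambda>ys. B (x # ys)) zs)"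
      using Cons.IH[OF cont_shift[OF cB]] by blast
    then show "ab_ext_scalar (\<lambda>xs. c * B xs) (z # zs) = c * ab_ext_scalar B (z # zs)"
      by (simp add: Blinfun_scale[OF bl[OF cB]] blinfun.scaleR_right)
  qed
qed

lemma ab_add:
  fixes B :: "'a::real_normed_vector list \<Rightarrow> real"
  shows "cont_mlin (length zs) B \<Longrightarrow> cont_mlin (length zs) B' \<Longrightarrow>
    ab_ext_scalar (\<lambda>xs. B xs + B' xs) zs = ab_ext_scalar B zs + ab_ext_scalar B' zs"
  using ab_main by blast

lemma ab_scale:
  fixes B :: "'a::real_normed_vector list \<Rightarrow> real"
  shows "cont_mlin (length zs) B \<Longrightarrow> ab_ext_scalar (\<lambda>xs. c * B xs) zs = c * ab_ext_scalar B zs"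
  using ab_main by blast

lemma ab_bound:
  fixes B :: "'a::real_normed_vector list \<Rightarrow> real"
  shows "cont_mlin (length zs) B \<Longrightarrow> C \<ge> 0 \<Longrightarrow>
    (\<forall>xs. length xs = length zs \<longrightarrow> \<bar>B xs\<bar> \<le> C * prod_list (map norm xs)) \<Longrightarrow>
    \<bar>ab_ext_scalar B zs\<bar> \<le> C * prod_list (map norm zs)"
  using ab_main by blast

lemma ab_bl_first:
  fixes B :: "'a::real_normed_vector list \<Rightarrow> real"
  assumes cB: "cont_mlin (Suc (length zs)) B"
  shows "bounded_linear (\<lambda>x. ab_ext_scalar (\<lambda>ys. B (x # ys)) zs)"
proof -
  obtain C where C0: "C \<ge> 0" and C: "\<forall>xs. length xs = Suc (length zs) \<longrightarrow> norm (B xs) \<le> C * prod_list (map norm xs)"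
    using max0_bound cB unfolding cont_mlin_def by blast
  show ?thesis
  proof (rule bounded_linear_intro[where K = "C * prod_list (map norm zs)"])
    fix x y :: 'a
    have "ab_ext_scalar (\<lambda>ys. B ((x + y) # ys)) zs
        = ab_ext_scalar (\<lambda>ys. B (x # ys) + B (y # ys)) zs"
      by (rule ab_cong) (use linear_add[OF cont_lin_first[OF cB]] in \<open>simp\<close>)
    also have "\<dots> = ab_ext_scalar (\<lambda>ys. B (x # ys)) zs + ab_ext_scalar (\<lambda>ys. B (y # ys)) zs"
      using ab_add[OF cont_shift[OF cB, of x] cont_shift[OF cB, of y]] by simp
    finally show "ab_ext_scalar (\<lambda>ys. B ((x + y) # ys)) zs
        = ab_ext_scalar (\<lambda>ys. B (x # ys)) zs + ab_ext_scalar (\<lambda>ys. B (y # ys)) zs" .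
  next
    fix r and x :: 'a
    have "ab_ext_scalar (\<lambda>ys. B ((r *\<^sub>R x) # ys)) zs
        = ab_ext_scalar (\<lambda>ys. r * B (x # ys)) zs"
      by (rule ab_cong) (use linear_scale[OF cont_lin_first[OF cB]] in \<open>simp\<close>)
    also have "\<dots> = r * ab_ext_scalar (\<lambda>ys. B (x # ys)) zs"
      using ab_scale[OF cont_shift[OF cB, of x]] by simp
    finally show "ab_ext_scalar (\<lambda>ys. B ((r *\<^sub>R x) # ys)) zs
        = r *\<^sub>R ab_ext_scalar (\<lambda>ys. B (x # ys)) zs" by simp
  next
    fix x :: 'a
    have "\<forall>xs. length xs = length zs \<longrightarrow> \<bar>B (x # xs)\<bar> \<le> (C * norm x) * prod_list (map norm xs)"
      using shift_bound[where B=B and n="length zs" and C=C and x=x] C by simp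
    then have "\<bar>ab_ext_scalar (\<lambda>ys. B (x # ys)) zs\<bar> \<le> (C * norm x) * prod_list (map norm zs)"
      using ab_bound[OF cont_shift[OF cB, of x]] C0 by simp
    then show "norm (ab_ext_scalar (\<lambda>ys. B (x # ys)) zs) \<le> norm x * (C * prod_list (map norm zs))"
      by (simp add: ac_simps)
  qed
qed

lemma ab_first:
  fixes B :: "'a::real_normed_vector list \<Rightarrow> real"
  assumes "cont_mlin (Suc (length zs)) B"
  shows "blinfun_apply (Blinfun (\<lambda>x. ab_ext_scalar (\<lambda>ys. B (x # ys)) zs)) = (\<lambda>x. ab_ext_scalar (\<lambda>ys. B (x # ys)) zs)"
  using bounded_linear_Blinfun_apply[OF ab_bl_first[OF assms]] .

lemma can_emb_apply: "blinfun_apply (can_emb y) \<phi> = blinfun_apply \<phi> y"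
  unfolding can_emb_def by (simp add: bounded_linear_Blinfun_apply)

lemma can_emb_bl: "bounded_linear (can_emb :: 'a::real_normed_vector \<Rightarrow> 'a bidual)"
proof (rule bounded_linear_intro[where K=1])
  fix x y :: 'a show "can_emb (x + y) = can_emb x + can_emb y"
    by (rule blinfun_eqI) (simp add: can_emb_apply blinfun.add_right plus_blinfun.rep_eq)
next
  fix r and x :: 'a show "can_emb (r *\<^sub>R x) = r *\<^sub>R can_emb x"
    by (rule blinfun_eqI) (simp add: can_emb_apply blinfun.scaleR_right scaleR_blinfun.rep_eq)
next
  fix x :: 'a show "norm (can_emb x) \<le> norm x * 1"
    by (rule norm_blinfun_bound) (auto simp: can_emb_apply, metis norm_blinfun mult.commute real_norm_def)
qed

lemma emb_transpose_apply:
  "blinfun_apply (emb_transpose w) \<phi> = blinfun_apply w (can_emb \<phi>)"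
  unfolding emb_transpose_def
  by (simp add: bounded_linear_Blinfun_apply bounded_linear_compose[OF blinfun.bounded_linear_right can_emb_bl])

lemma emb_transpose_can: "emb_transpose (can_emb z) = z"
  by (rule blinfun_eqI) (simp add: emb_transpose_apply can_emb_apply)

lemma ab_can_first:
  fixes B :: "'a::real_normed_vector list \<Rightarrow> real"
  assumes "cont_mlin (Suc (length zs)) B"
  shows "ab_ext_scalar B (can_emb x # zs) = ab_ext_scalar (\<lambda>ys. B (x # ys)) zs"
  by (simp add: can_emb_apply ab_first[OF assms])

lemma ab_map_can:
  fixes B :: "'a::real_normed_vector list \<Rightarrow> real"
  shows "cont_mlin (length xs) B \<Longrightarrow> ab_ext_scalar B (map can_emb xs) = B xs"
proof (induction xs arbitrary: B)
  case Nil then show ?case by simp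
next
  case (Cons x xs)
  then have c: "cont_mlin (Suc (length (map can_emb xs))) B" by simp
  show ?case
    using ab_can_first[OF c, of x] Cons.IH[OF cont_shift[of "length xs" B x]] Cons.prems by simp
qed

lemma cont_snoc:
  fixes B :: "'a::real_normed_vector list \<Rightarrow> 'e::real_normed_vector"
  assumes "cont_mlin (Suc m) B"
  shows "cont_mlin m (\<lambda>ys. B (ys @ [x]))"
proof -
  from assms obtain C where C: "\<forall>xs. length xs = Suc m \<longrightarrow> norm (B xs) \<le> C * prod_list (map norm xs)"
    unfolding cont_mlin_def bounded_mlin_def by blast
  have "multilinear_on m (\<lambda>ys. B (ys @ [x]))"
    unfolding multilinear_on_def
  proof (intro allI impI)
    fix xs :: "'a list" and i assume "length xs = m" "i < m"
    then have "linear (\<lambda>t. B ((xs @ [x])[i := t]))"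
      using assms unfolding cont_mlin_def multilinear_on_def by auto
    then show "linear (\<lambda>t. B (xs[i := t] @ [x]))" using \<open>i < m\<close> \<open>length xs = m\<close>
      by (simp add: list_update_append)
  qed
  moreover have "bounded_mlin m (\<lambda>ys. B (ys @ [x]))"
    unfolding bounded_mlin_def
  proof (rule exI[of _ "C * norm x"], intro allI impI)
    fix xs :: "'a list" assume "length xs = m"
    then show "norm (B (xs @ [x])) \<le> C * norm x * prod_list (map norm xs)"
      using C[rule_format, of "xs @ [x]"] by (simp add: ac_simps)
  qed
  ultimately show ?thesis unfolding cont_mlin_def by simp
qed

lemma ab_snoc:
  fixes B :: "'a::real_normed_vector list \<Rightarrow> real"
  shows "cont_mlin (Suc (length zs)) B \<Longrightarrow>
    ab_ext_scalar B (zs @ [can_emb x]) = ab_ext_scalar (\<lambda>ys. B (ys @ [x])) zs"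
proof (induction zs arbitrary: B)
  case Nil
  then show ?case using ab_can_first[of "[]" B x] by simp
next
  case (Cons z zs)
  have "(\<lambda>y. ab_ext_scalar (\<lambda>ys. B (y # ys)) (zs @ [can_emb x]))
      = (\<lambda>y. ab_ext_scalar (\<lambda>ys. B (y # ys @ [x])) zs)"
    using Cons.IH[OF cont_shift] Cons.prems by simp
  then show ?case by simp
qed

lemma ab_lin_pos:
  fixes B :: "'a::real_normed_vector list \<Rightarrow> real"
  shows "cont_mlin (length zs) B \<Longrightarrow> i < length zs \<Longrightarrow> linear (\<lambda>z. ab_ext_scalar B (zs[i := z]))"
proof (induction zs arbitrary: B i)
  case Nil then show ?case by simp
next
  case (Cons z zs)
  then have cB: "cont_mlin (Suc (length zs)) B" by simp
  show ?case
  proof (cases i)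
    case 0
    have "linear (\<lambda>t. blinfun_apply t (Blinfun (\<lambda>x. ab_ext_scalar (\<lambda>ys. B (x # ys)) zs)))"
      by (rule bounded_linear.linear) (rule bounded_linear_apply_blinfun)
    then show ?thesis using 0 by simp
  next
    case (Suc j)
    then have j: "j < length zs" using Cons.prems by simp
    let ?g = "\<lambda>t y. ab_ext_scalar (\<lambda>ys. B (y # ys)) (zs[j := t])"
    have bl: "bounded_linear (?g t)" for t
      using ab_bl_first[of "zs[j := t]" B] cB by simp
    have lin: "linear (\<lambda>t. ?g t y)" for y
      using Cons.IH[OF cont_shift[OF cB, of y] j] by simp
    have "linear (\<lambda>t. blinfun_apply z (Blinfun (?g t)))"
    proof (rule linearI)
      fix t1 t2
      have "Blinfun (?g (t1 + t2)) = Blinfun (\<lambda>y. ?g t1 y + ?g t2 y)"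
        using linear_add[OF lin] by simp
      also have "\<dots> = Blinfun (?g t1) + Blinfun (?g t2)" by (rule Blinfun_add[OF bl bl])
      finally show "blinfun_apply z (Blinfun (?g (t1 + t2))) = blinfun_apply z (Blinfun (?g t1)) + blinfun_apply z (Blinfun (?g t2))"
        by (simp add: blinfun.add_right)
    next
      fix c t
      have "Blinfun (?g (c *\<^sub>R t)) = Blinfun (\<lambda>y. c * ?g t y)"
        using linear_scale[OF lin] by simp
      also have "\<dots> = c *\<^sub>R Blinfun (?g t)" by (rule Blinfun_scale[OF bl])
      finally show "blinfun_apply z (Blinfun (?g (c *\<^sub>R t))) = c *\<^sub>R blinfun_apply z (Blinfun (?g t))"
        by (simp add: blinfun.scaleR_right)
    qed
    then show ?thesis using Suc by simp
  qed
qed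

lemma ab_cont:
  fixes B :: "'a::real_normed_vector list \<Rightarrow> real"
  assumes "cont_mlin m B"
  shows "cont_mlin m (ab_ext_scalar B)"
proof -
  obtain C where C0: "C \<ge> 0" and C: "\<forall>xs. length xs = m \<longrightarrow> norm (B xs) \<le> C * prod_list (map norm xs)"
    using max0_bound assms unfolding cont_mlin_def by blast
  have "multilinear_on m (ab_ext_scalar B)"
    unfolding multilinear_on_def using ab_lin_pos assms by metis
  moreover have "bounded_mlin m (ab_ext_scalar B)"
    unfolding bounded_mlin_def
  proof (rule exI[of _ C], intro allI impI)
    fix zs :: "'a bidual list" assume "length zs = m"
    then show "norm (ab_ext_scalar B zs) \<le> C * prod_list (map norm zs)"
      using ab_bound[of zs B C] assms C0 C by simp
  qed
  ultimately show ?thesis unfolding cont_mlin_def by simp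
qed

lemma comp_cont:
  fixes A :: "'a::real_normed_vector list \<Rightarrow> 'e::real_normed_vector"
  assumes "cont_mlin m A"
  shows "cont_mlin m (\<lambda>xs. blinfun_apply \<psi> (A xs))"
proof -
  obtain C where C0: "C \<ge> 0" and C: "\<forall>xs. length xs = m \<longrightarrow> norm (A xs) \<le> C * prod_list (map norm xs)"
    using max0_bound assms unfolding cont_mlin_def by blast
  have "multilinear_on m (\<lambda>xs. blinfun_apply \<psi> (A xs))"
    unfolding multilinear_on_def
  proof (intro allI impI)
    fix xs :: "'a list" and i assume "length xs = m" "i < m"
    then have "linear (\<lambda>t. A (xs[i := t]))"
      using assms unfolding cont_mlin_def multilinear_on_def by auto
    then show "linear (\<lambda>t. blinfun_apply \<psi> (A (xs[i := t])))"
      using linear_compose[of "\<lambda>t. A (xs[i := t])" "blinfun_apply \<psi>"] bounded_linear.linear[OF blinfun.bounded_linear_right]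
      by (auto simp: o_def)
  qed
  moreover have "bounded_mlin m (\<lambda>xs. blinfun_apply \<psi> (A xs))"
    unfolding bounded_mlin_def
  proof (rule exI[of _ "norm \<psi> * C"], intro allI impI)
    fix xs :: "'a list" assume "length xs = m"
    have "norm (blinfun_apply \<psi> (A xs)) \<le> norm \<psi> * norm (A xs)" by (rule norm_blinfun)
    also have "\<dots> \<le> norm \<psi> * (C * prod_list (map norm xs))"
      using C \<open>length xs = m\<close> by (intro mult_left_mono) auto
    finally show "norm (blinfun_apply \<psi> (A xs)) \<le> norm \<psi> * C * prod_list (map norm xs)"
      by (simp add: ac_simps)
  qed
  ultimately show ?thesis unfolding cont_mlin_def by simp
qed

lemma abext_bl:
  fixes A :: "'a::real_normed_vector list \<Rightarrow> 'e::real_normed_vector"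
  assumes cA: "cont_mlin m A" and len: "length zs = m"
  shows "bounded_linear (\<lambda>\<psi>. ab_ext_scalar (\<lambda>xs. blinfun_apply \<psi> (A xs)) zs)"
proof -
  obtain C where C0: "C \<ge> 0" and C: "\<forall>xs. length xs = m \<longrightarrow> norm (A xs) \<le> C * prod_list (map norm xs)"
    using max0_bound cA unfolding cont_mlin_def by blast
  have cc: "cont_mlin (length zs) (\<lambda>xs. blinfun_apply \<psi> (A xs))" for \<psi> :: "'e dual"
    using comp_cont[OF cA] len by simp
  show ?thesis
  proof (rule bounded_linear_intro[where K = "C * prod_list (map norm zs)"])
    fix \<psi>1 \<psi>2 :: "'e dual"
    show "ab_ext_scalar (\<lambda>xs. blinfun_apply (\<psi>1 + \<psi>2) (A xs)) zs =
      ab_ext_scalar (\<lambda>xs. blinfun_apply \<psi>1 (A xs)) zs + ab_ext_scalar (\<lambda>xs. blinfun_apply \<psi>2 (A xs)) zs"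
      using ab_add[OF cc cc] by (simp add: plus_blinfun.rep_eq)
  next
    fix r and \<psi> :: "'e dual"
    show "ab_ext_scalar (\<lambda>xs. blinfun_apply (r *\<^sub>R \<psi>) (A xs)) zs =
      r *\<^sub>R ab_ext_scalar (\<lambda>xs. blinfun_apply \<psi> (A xs)) zs"
      using ab_scale[OF cc] by (simp add: scaleR_blinfun.rep_eq)
  next
    fix \<psi> :: "'e dual"
    have "\<forall>xs. length xs = length zs \<longrightarrow> \<bar>blinfun_apply \<psi> (A xs)\<bar> \<le> (norm \<psi> * C) * prod_list (map norm xs)"
    proof (intro allI impI)
      fix xs :: "'a list" assume "length xs = length zs"
      have "\<bar>blinfun_apply \<psi> (A xs)\<bar> \<le> norm \<psi> * norm (A xs)" using norm_blinfun[of \<psi> "A xs"] by simp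
      also have "\<dots> \<le> norm \<psi> * (C * prod_list (map norm xs))"
        using C \<open>length xs = length zs\<close> len by (intro mult_left_mono) auto
      finally show "\<bar>blinfun_apply \<psi> (A xs)\<bar> \<le> (norm \<psi> * C) * prod_list (map norm xs)"
        by (simp add: ac_simps)
    qed
    then have "\<bar>ab_ext_scalar (\<lambda>xs. blinfun_apply \<psi> (A xs)) zs\<bar> \<le> (norm \<psi> * C) * prod_list (map norm zs)"
      using ab_bound[OF cc] C0 by simp
    then show "norm (ab_ext_scalar (\<lambda>xs. blinfun_apply \<psi> (A xs)) zs) \<le> norm \<psi> * (C * prod_list (map norm zs))"
      by (simp add: ac_simps)
  qed
qed

lemma abext_apply:
  fixes A :: "'a::real_normed_vector list \<Rightarrow> 'e::real_normed_vector"
  assumes "cont_mlin m A" "length zs = m"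
  shows "blinfun_apply (ab_ext A zs) \<psi> = ab_ext_scalar (\<lambda>xs. blinfun_apply \<psi> (A xs)) zs"
  unfolding ab_ext_def using bounded_linear_Blinfun_apply[OF abext_bl[OF assms]] by simp

lemma abext_cont:
  fixes A :: "'a::real_normed_vector list \<Rightarrow> 'e::real_normed_vector"
  assumes cA: "cont_mlin m A"
  shows "cont_mlin m (ab_ext A)"
proof -
  obtain C where C0: "C \<ge> 0" and C: "\<forall>xs. length xs = m \<longrightarrow> norm (A xs) \<le> C * prod_list (map norm xs)"
    using max0_bound cA unfolding cont_mlin_def by blast
  have "multilinear_on m (ab_ext A)"
    unfolding multilinear_on_def
  proof (intro allI impI)
    fix xs :: "'a bidual list" and i assume len: "length xs = m" and i: "i < m"
    have cc: "cont_mlin (length xs) (\<lambda>ys. blinfun_apply \<psi> (A ys))" for \<psi> :: "'e dual"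
      using comp_cont[OF cA] len by simp
    have lin: "linear (\<lambda>t. ab_ext_scalar (\<lambda>ys. blinfun_apply \<psi> (A ys)) (xs[i := t]))" for \<psi>
      using ab_lin_pos[OF cc] i len by simp
    have ap: "blinfun_apply (ab_ext A (xs[i := t])) \<psi> = ab_ext_scalar (\<lambda>ys. blinfun_apply \<psi> (A ys)) (xs[i := t])" for t \<psi>
      using abext_apply[OF cA] len by simp
    show "linear (\<lambda>t. ab_ext A (xs[i := t]))"
    proof (rule linearI)
      fix t1 t2 show "ab_ext A (xs[i := t1 + t2]) = ab_ext A (xs[i := t1]) + ab_ext A (xs[i := t2])"
        by (rule blinfun_eqI) (simp add: ap plus_blinfun.rep_eq linear_add[OF lin])
    next
      fix c t show "ab_ext A (xs[i := c *\<^sub>R t]) = c *\<^sub>R ab_ext A (xs[i := t])"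
        by (rule blinfun_eqI) (simp add: ap scaleR_blinfun.rep_eq linear_scale[OF lin])
    qed
  qed
  moreover have "bounded_mlin m (ab_ext A)"
    unfolding bounded_mlin_def
  proof (rule exI[of _ C], intro allI impI)
    fix zs :: "'a bidual list" assume len: "length zs = m"
    have cc: "cont_mlin (length zs) (\<lambda>ys. blinfun_apply \<psi> (A ys))" for \<psi> :: "'e dual"
      using comp_cont[OF cA] len by simp
    show "norm (ab_ext A zs) \<le> C * prod_list (map norm zs)"
    proof (rule norm_blinfun_bound)
      show "0 \<le> C * prod_list (map norm zs)" using C0 by (intro mult_nonneg_nonneg prod_list_nonneg) auto
    next
      fix \<psi> :: "'e dual"
      have "\<forall>xs. length xs = length zs \<longrightarrow> \<bar>blinfun_apply \<psi> (A xs)\<bar> \<le> (norm \<psi> * C) * prod_list (map norm xs)"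
      proof (intro allI impI)
        fix xs :: "'a list" assume "length xs = length zs"
        have "\<bar>blinfun_apply \<psi> (A xs)\<bar> \<le> norm \<psi> * norm (A xs)" using norm_blinfun[of \<psi> "A xs"] by simp
        also have "\<dots> \<le> norm \<psi> * (C * prod_list (map norm xs))"
          using C \<open>length xs = length zs\<close> len by (intro mult_left_mono) auto
        finally show "\<bar>blinfun_apply \<psi> (A xs)\<bar> \<le> (norm \<psi> * C) * prod_list (map norm xs)"
          by (simp add: ac_simps)
      qed
      then have "\<bar>ab_ext_scalar (\<lambda>xs. blinfun_apply \<psi> (A xs)) zs\<bar> \<le> (norm \<psi> * C) * prod_list (map norm zs)"
        using ab_bound[OF cc] C0 by simp
      then show "norm (blinfun_apply (ab_ext A zs) \<psi>) \<le> C * prod_list (map norm zs) * norm \<psi>"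
        using abext_apply[OF cA len] by (simp add: ac_simps)
    qed
  qed
  ultimately show ?thesis unfolding cont_mlin_def by simp
qed



lemma sym_from:
  fixes f :: "'a list \<Rightarrow> 'b"
  assumes H1: "\<And>a b r. length r + 2 = m \<Longrightarrow> f (b # a # r) = f (a # b # r)"
    and H2: "\<And>a ys zs. length zs + 1 = m \<Longrightarrow> mset ys = mset zs \<Longrightarrow> f (a # ys) = f (a # zs)"
  shows "symmetric_mlin m f"
  unfolding symmetric_mlin_def
proof (intro allI impI)
  fix xs ys :: "'a list" assume len: "length xs = m" and ms: "mset ys = mset xs"
  show "f ys = f xs"
  proof (cases xs)
    case Nil then show ?thesis using ms by simp
  next
    case (Cons x xs')
    then obtain y ys' where ys: "ys = y # ys'" using ms by (cases ys) auto
    show ?thesis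
    proof (cases "y = x")
      case True
      then have "mset ys' = mset xs'" using ms ys Cons by simp
      then show ?thesis using H2[of xs' ys' x] len Cons ys True by simp
    next
      case False
      have "y \<in># mset xs" using ms ys by (metis list.set_intros(1) set_mset_mset)
      then have yin: "y \<in> set xs'" using Cons False by simp
      define rest where "rest = remove1 y xs'"
      have mr: "mset xs' = mset (y # rest)" using yin unfolding rest_def by simp
      have "length rest = length xs' - 1" by (simp add: rest_def length_remove1 yin)
      moreover have "length xs' > 0" using yin by (cases xs') auto
      ultimately have lr: "length rest + 2 = m" using len Cons by simp
      have "f xs = f (x # y # rest)" using H2[of xs' "y # rest" x] mr len Cons by simp
      also have "\<dots> = f (y # x # rest)" using H1[OF lr] by simp
      also have "\<dots> = f (y # ys')"
      proof -
        have "mset ys' = mset (x # rest)" using ms ys Cons mr by (simp add: add_mset_commute)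
        then show ?thesis using H2[of "x # rest" ys' y] lr by simp
      qed
      finally show ?thesis using ys by simp
    qed
  qed
qed

lemma sym_snoc:
  fixes B :: "'a list \<Rightarrow> 'b"
  assumes "symmetric_mlin m B" "length l + 1 = m"
  shows "B (x # l) = B (l @ [x])"
proof -
  have "mset (l @ [x]) = mset (x # l)" "length (x # l) = m" using assms(2) by simp_all
  then show ?thesis using assms(1) unfolding symmetric_mlin_def by metis
qed

lemma v_sym:
  fixes B :: "'a::real_normed_vector list \<Rightarrow> real"
  shows "cont_mlin m B \<Longrightarrow> symmetric_mlin m B \<Longrightarrow> 2 \<le> m \<Longrightarrow>
    (\<forall>a b r. length r + 2 = m \<longrightarrow> ab_ext_scalar B (b # a # r) = ab_ext_scalar B (a # b # r)) \<Longrightarrow>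
    symmetric_mlin m (ab_ext_scalar B)"
proof (induction m arbitrary: B rule: less_induct)
  case (less m)
  note cB = less.prems(1) and sB = less.prems(2) and m2 = less.prems(3) and V = less.prems(4)
  show ?case
  proof (rule sym_from)
    fix a b r assume "length (r :: 'a bidual list) + 2 = m"
    then show "ab_ext_scalar B (b # a # r) = ab_ext_scalar B (a # b # r)" using V by blast
  next
    fix a and ys zs :: "'a bidual list"
    assume lz: "length zs + 1 = m" and ms: "mset ys = mset zs"
    have ly: "length ys = length zs" using ms mset_eq_length by blast
    define k where "k = length zs"
    have cB': "cont_mlin (Suc k) B" using cB lz k_def by simp
    have ab_eq: "ab_ext_scalar (\<lambda>l. B (x # l)) ws = ab_ext_scalar (\<lambda>l. B (l @ [x])) ws"
      if "length ws = k" for ws x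
    proof (rule ab_cong)
      fix l :: "'a list" assume "length l = length ws"
      then show "B (x # l) = B (l @ [x])" using sym_snoc[OF sB, of l x] lz k_def that by simp
    qed
    have "ab_ext_scalar (\<lambda>l. B (l @ [x])) ys = ab_ext_scalar (\<lambda>l. B (l @ [x])) zs" for x
    proof (cases "2 \<le> k")
      case False
      then have "k = 1" using m2 lz k_def by simp
      then obtain u v where "ys = [u]" "zs = [v]" using ly k_def
        by (metis One_nat_def length_0_conv length_Suc_conv)
      then show ?thesis using ms by simp
    next
      case True
      have c2: "cont_mlin k (\<lambda>l. B (l @ [x]))" using cont_snoc[OF cB'] .
      have s2: "symmetric_mlin k (\<lambda>l. B (l @ [x]))"
        unfolding symmetric_mlin_def
      proof (intro allI impI)
        fix us vs :: "'a list" assume "length us = k" "mset vs = mset us"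
        then have "length (us @ [x]) = m" "mset (vs @ [x]) = mset (us @ [x])" using lz k_def by simp_all
        then show "B (vs @ [x]) = B (us @ [x])" using sB unfolding symmetric_mlin_def by metis
      qed
      have v2: "\<forall>a b r. length r + 2 = k \<longrightarrow>
          ab_ext_scalar (\<lambda>l. B (l @ [x])) (b # a # r) = ab_ext_scalar (\<lambda>l. B (l @ [x])) (a # b # r)"
      proof (intro allI impI)
        fix a b r assume lr: "length (r :: 'a bidual list) + 2 = k"
        have "ab_ext_scalar (\<lambda>l. B (l @ [x])) (b # a # r) = ab_ext_scalar B ((b # a # r) @ [can_emb x])"
          using ab_snoc[of "b # a # r" B x] cB' lr by simp
        also have "\<dots> = ab_ext_scalar B ((a # b # r) @ [can_emb x])"
          using V[rule_format, of "r @ [can_emb x]" a b] lr lz k_def by simp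
        also have "\<dots> = ab_ext_scalar (\<lambda>l. B (l @ [x])) (a # b # r)"
          using ab_snoc[of "a # b # r" B x] cB' lr by simp
        finally show "ab_ext_scalar (\<lambda>l. B (l @ [x])) (b # a # r) = ab_ext_scalar (\<lambda>l. B (l @ [x])) (a # b # r)" .
      qed
      have "k < m" using lz k_def by simp
      from less.IH[OF this c2 s2 True v2] show ?thesis
        unfolding symmetric_mlin_def using ms k_def by blast
    qed
    then have "(\<lambda>x. ab_ext_scalar (\<lambda>l. B (x # l)) ys) = (\<lambda>x. ab_ext_scalar (\<lambda>l. B (x # l)) zs)"
      using ab_eq ly k_def by simp
    then show "ab_ext_scalar B (a # ys) = ab_ext_scalar B (a # zs)" by simp
  qed
qed

lemma swap_can:
  fixes B :: "'a::real_normed_vector list \<Rightarrow> real"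
  assumes cB: "cont_mlin m B" and sB: "symmetric_mlin m B" and lr: "length r + 2 = m"
  shows "ab_ext_scalar B (a # can_emb x # r) = ab_ext_scalar B (can_emb x # a # r)"
proof -
  have c1: "cont_mlin (Suc (length (a # r))) B" using cB lr by simp
  have c2: "cont_mlin (Suc (length r)) (\<lambda>ys. B (y # ys))" for y
    using cont_shift[of "Suc (length r)" B y] cB lr by (simp add: numeral_2_eq_2)
  have "ab_ext_scalar B (can_emb x # a # r) = ab_ext_scalar (\<lambda>ys. B (x # ys)) (a # r)"
    using ab_can_first[OF c1] .
  moreover have "(\<lambda>y. ab_ext_scalar (\<lambda>ys. B (y # ys)) (can_emb x # r))
      = (\<lambda>y. ab_ext_scalar (\<lambda>ys. B (x # y # ys)) r)"
  proof
    fix y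
    have "ab_ext_scalar (\<lambda>ys. B (y # ys)) (can_emb x # r) = ab_ext_scalar (\<lambda>ys. B (y # x # ys)) r"
      using ab_can_first[OF c2[of y]] by simp
    also have "\<dots> = ab_ext_scalar (\<lambda>ys. B (x # y # ys)) r"
    proof (rule ab_cong)
      fix ys :: "'a list" assume "length ys = length r"
      then have "length (x # y # ys) = m" "mset (y # x # ys) = mset (x # y # ys)" using lr by simp_all
      then show "B (y # x # ys) = B (x # y # ys)" using sB unfolding symmetric_mlin_def by metis
    qed
    finally show "ab_ext_scalar (\<lambda>ys. B (y # ys)) (can_emb x # r) = ab_ext_scalar (\<lambda>ys. B (x # y # ys)) r" .
  qed
  ultimately show ?thesis by simp
qed



lemma span_dual:
  fixes F :: "'a::real_normed_vector dual set"
  assumes "finite F"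
  shows "(\<forall>x. (\<forall>\<phi>\<in>F. blinfun_apply \<phi> x = 0) \<longrightarrow> blinfun_apply \<psi> x = 0) \<Longrightarrow> \<psi> \<in> span F"
  using assms
proof (induction F arbitrary: \<psi> rule: finite_induct)
  case empty
  then have "\<psi> = 0" by (intro blinfun_eqI) simp
  then show ?case by (simp add: span_zero)
next
  case (insert \<phi>0 F)
  show ?case
  proof (cases "\<exists>x0. (\<forall>\<phi>\<in>F. blinfun_apply \<phi> x0 = 0) \<and> blinfun_apply \<phi>0 x0 \<noteq> 0")
    case True
    then obtain x0 where x0F: "\<forall>\<phi>\<in>F. blinfun_apply \<phi> x0 = 0" and x0n: "blinfun_apply \<phi>0 x0 \<noteq> 0" by blast
    define x1 where "x1 = inverse (blinfun_apply \<phi>0 x0) *\<^sub>R x0"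
    have x1F: "\<forall>\<phi>\<in>F. blinfun_apply \<phi> x1 = 0" using x0F by (simp add: x1_def blinfun.scaleR_right)
    have x11: "blinfun_apply \<phi>0 x1 = 1" using x0n by (simp add: x1_def blinfun.scaleR_right)
    define \<psi>' where "\<psi>' = \<psi> - blinfun_apply \<psi> x1 *\<^sub>R \<phi>0"
    have "\<forall>x. (\<forall>\<phi>\<in>F. blinfun_apply \<phi> x = 0) \<longrightarrow> blinfun_apply \<psi>' x = 0"
    proof (intro allI impI)
      fix x assume xF: "\<forall>\<phi>\<in>F. blinfun_apply \<phi> x = 0"
      define y where "y = x - blinfun_apply \<phi>0 x *\<^sub>R x1"
      have "\<forall>\<phi>\<in>insert \<phi>0 F. blinfun_apply \<phi> y = 0"
        using xF x1F x11 by (simp add: y_def blinfun.diff_right blinfun.scaleR_right)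
      then have "blinfun_apply \<psi> y = 0" using insert.prems by blast
      then show "blinfun_apply \<psi>' x = 0"
        by (simp add: y_def \<psi>'_def blinfun.diff_right blinfun.scaleR_right minus_blinfun.rep_eq scaleR_blinfun.rep_eq)
    qed
    then have "\<psi>' \<in> span F" using insert.IH by blast
    then have "\<psi>' \<in> span (insert \<phi>0 F)" by (meson span_mono subset_insertI subsetD)
    moreover have "blinfun_apply \<psi> x1 *\<^sub>R \<phi>0 \<in> span (insert \<phi>0 F)"
      by (intro span_scale span_base) simp
    ultimately have "\<psi>' + blinfun_apply \<psi> x1 *\<^sub>R \<phi>0 \<in> span (insert \<phi>0 F)" by (rule span_add)
    then show ?thesis by (simp add: \<psi>'_def)
  next
    case False
    then have "\<forall>x. (\<forall>\<phi>\<in>F. blinfun_apply \<phi> x = 0) \<longrightarrow> blinfun_apply \<psi> x = 0"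
      using insert.prems by auto
    then have "\<psi> \<in> span F" using insert.IH by blast
    then show ?thesis by (meson span_mono subset_insertI subsetD)
  qed
qed

lemma fin_approx:
  fixes F :: "'a::real_normed_vector dual set" and z :: "'a bidual"
  assumes "finite F"
  shows "\<exists>x. \<forall>\<phi>\<in>F. blinfun_apply \<phi> x = blinfun_apply z \<phi>"
  using assms
proof (induction F rule: finite_induct)
  case empty then show ?case by simp
next
  case (insert \<phi>0 F)
  then obtain x where xF: "\<forall>\<phi>\<in>F. blinfun_apply \<phi> x = blinfun_apply z \<phi>" by blast
  show ?case
  proof (cases "\<exists>x0. (\<forall>\<phi>\<in>F. blinfun_apply \<phi> x0 = 0) \<and> blinfun_apply \<phi>0 x0 \<noteq> 0")
    case True
    then obtain x0 where x0F: "\<forall>\<phi>\<in>F. blinfun_apply \<phi> x0 = 0" and x0n: "blinfun_apply \<phi>0 x0 \<noteq> 0" by blast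
    define x' where "x' = x + ((blinfun_apply z \<phi>0 - blinfun_apply \<phi>0 x) / blinfun_apply \<phi>0 x0) *\<^sub>R x0"
    have "\<forall>\<phi>\<in>insert \<phi>0 F. blinfun_apply \<phi> x' = blinfun_apply z \<phi>"
      using xF x0F x0n by (simp add: x'_def blinfun.add_right blinfun.scaleR_right)
    then show ?thesis by blast
  next
    case False
    then have "\<phi>0 \<in> span F" using span_dual[OF insert.hyps(1)] by blast
    have "blinfun_apply z \<phi>0 = (\<lambda>\<phi>. blinfun_apply \<phi> x) \<phi>0"
    proof (rule linear_eq_on_span[OF _ _ _ \<open>\<phi>0 \<in> span F\<close>])
      show "linear (blinfun_apply z)" by (rule bounded_linear.linear) (rule blinfun.bounded_linear_right)
      show "linear (\<lambda>\<phi>. blinfun_apply \<phi> x)" by (rule bounded_linear.linear) (rule bounded_linear_apply_blinfun)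
      show "\<And>\<phi>. \<phi> \<in> F \<Longrightarrow> blinfun_apply z \<phi> = blinfun_apply \<phi> x" using xF by simp
    qed
    then show ?thesis using xF by auto
  qed
qed

lemma topspace_ws: "topspace weak_star = UNIV"
  unfolding weak_star_def by (simp add: topspace_pullback_topology)

lemma cont_into_ws:
  assumes "\<And>\<phi>. continuous_map T euclideanreal (\<lambda>t. blinfun_apply (g t) \<phi>)"
  shows "continuous_map T weak_star g"
  unfolding weak_star_def
proof (rule continuous_map_pullback')
  show "continuous_map T (product_topology (\<lambda>_. euclideanreal) UNIV) ((\<lambda>z. blinfun_apply z) \<circ> g)"
    unfolding continuous_map_componentwise_UNIV using assms by (simp add: o_def)
qed simp

lemma cont_eval_ws: "continuous_map weak_star euclideanreal (\<lambda>z. blinfun_apply z \<phi>)"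
proof -
  have "continuous_map weak_star euclideanreal ((\<lambda>p. p \<phi>) \<circ> (\<lambda>z. blinfun_apply z))"
    unfolding weak_star_def
    by (rule continuous_map_pullback) (rule continuous_map_product_projection, simp)
  then show ?thesis by (simp add: o_def)
qed

lemma ws_dense:
  fixes z :: "'a::real_normed_vector bidual"
  assumes "openin weak_star U" "z \<in> U"
  shows "\<exists>x. can_emb x \<in> U"
proof -
  obtain V where V: "openin (product_topology (\<lambda>_. euclideanreal) UNIV) V"
    and U: "U = (\<lambda>z. blinfun_apply z) -` V \<inter> UNIV"
    using assms(1) unfolding weak_star_def openin_pullback_topology by blast
  have "blinfun_apply z \<in> V" using assms(2) U by simp
  then obtain W where finW: "finite {i \<in> UNIV. W i \<noteq> topspace euclideanreal}"
    and inW: "blinfun_apply z \<in> Pi\<^sub>E UNIV W" and WV: "Pi\<^sub>E UNIV W \<subseteq> V"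
    using V unfolding openin_product_topology_alt by blast
  obtain x where x: "\<forall>\<phi>\<in>{i. W i \<noteq> UNIV}. blinfun_apply \<phi> x = blinfun_apply z \<phi>"
    using fin_approx[of "{i. W i \<noteq> UNIV}" z] finW by auto
  have "blinfun_apply (can_emb x) \<in> Pi\<^sub>E UNIV W"
    using inW x by (auto simp: PiE_iff can_emb_apply) (metis UNIV_I)
  then show ?thesis using WV U by blast
qed

lemma lemK:
  fixes G :: "'a::real_normed_vector bidual \<Rightarrow>\<^sub>L real"
  assumes H: "\<forall>w :: 'a bidual bidual. blinfun_apply w G = blinfun_apply G (emb_transpose w)"
  shows "blinfun_apply G y = blinfun_apply y (Blinfun (\<lambda>x. blinfun_apply G (can_emb x)))"
proof -
  define canL where "canL = Blinfun (can_emb :: 'a \<Rightarrow> 'a bidual)"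
  have canL: "blinfun_apply canL = can_emb" unfolding canL_def by (rule bounded_linear_Blinfun_apply[OF can_emb_bl])
  have bl: "bounded_linear (\<lambda>H :: 'a bidual \<Rightarrow>\<^sub>L real. blinfun_apply H y - blinfun_apply y (H o\<^sub>L canL))"
    by (intro bounded_linear_sub bounded_linear_apply_blinfun
        bounded_linear_compose[OF blinfun.bounded_linear_right]
        bounded_bilinear.bounded_linear_left[OF bounded_bilinear_blinfun_compose])
  define W where "W = Blinfun (\<lambda>H :: 'a bidual \<Rightarrow>\<^sub>L real. blinfun_apply H y - blinfun_apply y (H o\<^sub>L canL))"
  have Wa: "blinfun_apply W H = blinfun_apply H y - blinfun_apply y (H o\<^sub>L canL)" for H
    unfolding W_def using bounded_linear_Blinfun_apply[OF bl] by simp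
  have cc: "can_emb \<phi> o\<^sub>L canL = \<phi>" for \<phi> :: "'a dual"
    by (rule blinfun_eqI) (simp add: canL can_emb_apply)
  have "emb_transpose W = 0"
    by (rule blinfun_eqI) (simp add: emb_transpose_apply Wa cc can_emb_apply)
  then have "blinfun_apply W G = 0" using H by simp
  moreover have "G o\<^sub>L canL = Blinfun (\<lambda>x. blinfun_apply G (can_emb x))"
    by (rule blinfun_eqI) (simp add: canL bounded_linear_Blinfun_apply
        bounded_linear_compose[OF blinfun.bounded_linear_right can_emb_bl])
  ultimately show ?thesis by (simp add: Wa)
qed

lemma lemT:
  fixes D :: "'a::real_normed_vector bidual list \<Rightarrow> real"
  shows "length ws = n \<Longrightarrow> cont_mlin n D \<Longrightarrow> symmetric_mlin n D \<Longrightarrow>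
    (\<forall>z zs. length zs + 1 = n \<longrightarrow> D (z # zs) = blinfun_apply z (Blinfun (\<lambda>x. D (can_emb x # zs)))) \<Longrightarrow>
    ab_ext_scalar D ws = D (map emb_transpose ws)"
proof (induction ws arbitrary: n D)
  case Nil then show ?case by simp
next
  case (Cons w ws)
  then obtain k where n: "n = Suc k" and k: "length ws = k" by auto
  note cD = Cons.prems(2) and sD = Cons.prems(3) and FC = Cons.prems(4)
  have cD': "cont_mlin (Suc k) D" using cD n by simp
  have swp: "D (u # v # zs) = D (v # u # zs)" if "length zs + 2 = n" for u v zs
  proof -
    have "length (v # u # zs) = n" "mset (u # v # zs) = mset (v # u # zs)" using that by simp_all
    then show ?thesis using sD unfolding symmetric_mlin_def by metis
  qed
  let ?rs = "map emb_transpose ws"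
  have IH: "ab_ext_scalar (\<lambda>l. D (y # l)) ws = D (y # ?rs)" for y
  proof (rule Cons.IH[OF k cont_shift[OF cD']])
    show "symmetric_mlin k (\<lambda>l. D (y # l))"
      unfolding symmetric_mlin_def
    proof (intro allI impI)
      fix us vs :: "'a bidual list" assume "length us = k" "mset vs = mset us"
      then have "length (y # us) = n" "mset (y # vs) = mset (y # us)" using n by simp_all
      then show "D (y # vs) = D (y # us)" using sD unfolding symmetric_mlin_def by metis
    qed
    show "\<forall>z zs. length zs + 1 = k \<longrightarrow> D (y # z # zs) = blinfun_apply z (Blinfun (\<lambda>x. D (y # can_emb x # zs)))"
    proof (intro allI impI)
      fix z zs assume lz: "length (zs :: 'a bidual list) + 1 = k"
      have "D (y # z # zs) = D (z # y # zs)" by (rule swp) (use lz n in simp)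
      also have "\<dots> = blinfun_apply z (Blinfun (\<lambda>x. D (can_emb x # y # zs)))"
        by (rule FC[rule_format]) (use lz n in simp)
      also have "(\<lambda>x. D (can_emb x # y # zs)) = (\<lambda>x. D (y # can_emb x # zs))"
        by (rule ext, rule swp) (use lz n in simp)
      finally show "D (y # z # zs) = blinfun_apply z (Blinfun (\<lambda>x. D (y # can_emb x # zs)))" .
    qed
  qed
  have lr: "length ?rs = k" using k by simp
  have e1: "Blinfun (\<lambda>y. D (y # ?rs)) = can_emb (Blinfun (\<lambda>x. D (can_emb x # ?rs)))"
  proof (rule blinfun_eqI)
    fix y
    have "D (y # ?rs) = blinfun_apply y (Blinfun (\<lambda>x. D (can_emb x # ?rs)))"
      by (rule FC[rule_format]) (use lr n in simp)
    then show "blinfun_apply (Blinfun (\<lambda>y. D (y # ?rs))) y = blinfun_apply (can_emb (Blinfun (\<lambda>x. D (can_emb x # ?rs)))) y"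
      by (simp add: bounded_linear_Blinfun_apply[OF cont_bl_first[OF cD' lr]] can_emb_apply)
  qed
  have "ab_ext_scalar D (w # ws) = blinfun_apply w (Blinfun (\<lambda>y. D (y # ?rs)))" using IH by simp
  also have "\<dots> = blinfun_apply (emb_transpose w) (Blinfun (\<lambda>x. D (can_emb x # ?rs)))"
    by (simp add: e1 emb_transpose_apply)
  also have "\<dots> = D (emb_transpose w # ?rs)"
    by (rule FC[rule_format, symmetric]) (use lr n in simp)
  finally show ?case by simp
qed



theorem theorem3p1:
  fixes A :: "'a::banach list \<Rightarrow> 'e::banach" and m :: nat
  assumes "m \<ge> 2"
    and "cont_mlin m A"
    and "symmetric_mlin m A"
  defines "At \<equiv> ab_ext A"
  defines "Att \<equiv> ab_ext (ab_ext A)"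
  shows
    "let
       i   = symmetric_mlin m At;
       ii  = (\<forall>zs j. length zs = m \<longrightarrow> j < m \<longrightarrow>
                 continuous_map weak_star weak_star (\<lambda>z. At (zs[j := z])));
       iii = (\<forall>ws. length ws = m \<longrightarrow>
                 emb_transpose (Att ws) = At (map emb_transpose ws));
       iv  = (\<forall>zs. length zs = m \<longrightarrow>
                 continuous_map weak_star weak_star (\<lambda>z. At (zs[1 := z])));
       v   = (\<forall>zs. length zs = m \<longrightarrow> At (zs ! 1 # zs ! 0 # drop 2 zs) = At zs)
     in (i \<longleftrightarrow> ii) \<and> (i \<longleftrightarrow> iii) \<and> (i \<longleftrightarrow> iv) \<and> (i \<longleftrightarrow> v)"
proof -
  note m2 = assms(1) and cA = assms(2) and sA = assms(3)
  have cD: "cont_mlin m (\<lambda>xs. blinfun_apply \<psi> (A xs))" for \<psi> :: "'e dual"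
    using comp_cont[OF cA] .
  have sD: "symmetric_mlin m (\<lambda>xs. blinfun_apply \<psi> (A xs))" for \<psi> :: "'e dual"
    using sA unfolding symmetric_mlin_def by metis
  have At_ap: "blinfun_apply (At zs) \<psi> = ab_ext_scalar (\<lambda>xs. blinfun_apply \<psi> (A xs)) zs"
    if "length zs = m" for zs \<psi>
    unfolding At_def using abext_apply[OF cA that] .
  have cAt: "cont_mlin m At" unfolding At_def using abext_cont[OF cA] .
  have cabD: "cont_mlin m (ab_ext_scalar (\<lambda>xs. blinfun_apply \<psi> (A xs)))" for \<psi> :: "'e dual"
    using ab_cont[OF cD] .
  have FC: "ab_ext_scalar (\<lambda>xs. blinfun_apply \<psi> (A xs)) (z # zs) =
      blinfun_apply z (Blinfun (\<lambda>x. ab_ext_scalar (\<lambda>xs. blinfun_apply \<psi> (A xs)) (can_emb x # zs)))"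
    if "length zs + 1 = m" for \<psi> :: "'e dual" and z zs
  proof -
    have c: "cont_mlin (Suc (length zs)) (\<lambda>xs. blinfun_apply \<psi> (A xs))" using cD that by simp
    show ?thesis using ab_can_first[OF c] by simp
  qed
  have iii_sc: "blinfun_apply (emb_transpose (Att ws)) \<phi> = ab_ext_scalar (ab_ext_scalar (\<lambda>xs. blinfun_apply \<phi> (A xs))) ws
      \<and> blinfun_apply (At (map emb_transpose ws)) \<phi> = ab_ext_scalar (\<lambda>xs. blinfun_apply \<phi> (A xs)) (map emb_transpose ws)"
    if "length ws = m" for ws and \<phi> :: "'e dual"
  proof
    have "blinfun_apply (emb_transpose (Att ws)) \<phi> = blinfun_apply (Att ws) (can_emb \<phi>)"
      by (rule emb_transpose_apply)
    also have "\<dots> = ab_ext_scalar (\<lambda>zs. blinfun_apply (can_emb \<phi>) (At zs)) ws"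
      unfolding Att_def At_def[symmetric] using abext_apply[OF cAt that] .
    also have "\<dots> = ab_ext_scalar (ab_ext_scalar (\<lambda>xs. blinfun_apply \<phi> (A xs))) ws"
      by (rule ab_cong) (simp add: can_emb_apply At_ap that)
    finally show "blinfun_apply (emb_transpose (Att ws)) \<phi> = ab_ext_scalar (ab_ext_scalar (\<lambda>xs. blinfun_apply \<phi> (A xs))) ws" .
    show "blinfun_apply (At (map emb_transpose ws)) \<phi> = ab_ext_scalar (\<lambda>xs. blinfun_apply \<phi> (A xs)) (map emb_transpose ws)"
      using At_ap that by simp
  qed

  define i where "i = symmetric_mlin m At"
  define ii where "ii = (\<forall>zs j. length zs = m \<longrightarrow> j < m \<longrightarrow>
                 continuous_map weak_star weak_star (\<lambda>z. At (zs[j := z])))"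
  define iii where "iii = (\<forall>ws. length ws = m \<longrightarrow>
                 emb_transpose (Att ws) = At (map emb_transpose ws))"
  define iv where "iv = (\<forall>zs. length zs = m \<longrightarrow>
                 continuous_map weak_star weak_star (\<lambda>z. At (zs[1 := z])))"
  define v where "v = (\<forall>zs. length zs = m \<longrightarrow> At (zs ! 1 # zs ! 0 # drop 2 zs) = At zs)"

  have sym_sc: "symmetric_mlin m (ab_ext_scalar (\<lambda>xs. blinfun_apply \<psi> (A xs)))" if i for \<psi> :: "'e dual"
    unfolding symmetric_mlin_def
  proof (intro allI impI)
    fix xs ys :: "'a bidual list" assume "length xs = m" "mset ys = mset xs"
    moreover then have "length ys = m" by (metis mset_eq_length)
    ultimately show "ab_ext_scalar (\<lambda>xs. blinfun_apply \<psi> (A xs)) ys = ab_ext_scalar (\<lambda>xs. blinfun_apply \<psi> (A xs)) xs"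
      using \<open>i\<close> unfolding i_def symmetric_mlin_def by (metis At_ap)
  qed

  have i_v: "i \<Longrightarrow> v"
    unfolding i_def v_def
  proof (intro allI impI)
    fix zs :: "'a bidual list" assume s: "symmetric_mlin m At" and l: "length zs = m"
    then obtain a b r where zs: "zs = a # b # r" using m2
      by (metis One_nat_def Suc_1 Suc_le_length_iff)
    have "mset (zs ! 1 # zs ! 0 # drop 2 zs) = mset zs" using zs by simp
    then show "At (zs ! 1 # zs ! 0 # drop 2 zs) = At zs" using s l unfolding symmetric_mlin_def by blast
  qed

  have v_i: "v \<Longrightarrow> i"
  proof -
    assume v
    have S: "symmetric_mlin m (ab_ext_scalar (\<lambda>xs. blinfun_apply \<psi> (A xs)))" for \<psi> :: "'e dual"
    proof (rule v_sym[OF cD sD m2], intro allI impI)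
      fix a b r assume lr: "length (r :: 'a bidual list) + 2 = m"
      have "At ((a # b # r) ! 1 # (a # b # r) ! 0 # drop 2 (a # b # r)) = At (a # b # r)"
        using \<open>v\<close> lr unfolding v_def by (metis length_Cons add_2_eq_Suc')
      then have "At (b # a # r) = At (a # b # r)" by simp
      then have "blinfun_apply (At (b # a # r)) \<psi> = blinfun_apply (At (a # b # r)) \<psi>" by simp
      then show "ab_ext_scalar (\<lambda>xs. blinfun_apply \<psi> (A xs)) (b # a # r) = ab_ext_scalar (\<lambda>xs. blinfun_apply \<psi> (A xs)) (a # b # r)"
        using At_ap lr by simp
    qed
    show i unfolding i_def symmetric_mlin_def
    proof (intro allI impI)
      fix xs ys :: "'a bidual list" assume l: "length xs = m" and ms: "mset ys = mset xs"
      then have l2: "length ys = m" by (metis mset_eq_length)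
      show "At ys = At xs"
      proof (rule blinfun_eqI)
        fix \<psi> show "blinfun_apply (At ys) \<psi> = blinfun_apply (At xs) \<psi>"
          using S[of \<psi>] l l2 ms At_ap unfolding symmetric_mlin_def by metis
      qed
    qed
  qed

  have i_ii: "i \<Longrightarrow> ii"
    unfolding ii_def
  proof (intro allI impI)
    fix zs :: "'a bidual list" and j assume "i" and l: "length zs = m" and j: "j < m"
    define r where "r = take j zs @ drop (Suc j) zs"
    have lr: "length r + 1 = m" using l j by (simp add: r_def)
    have eq: "At (zs[j := z]) = At (z # r)" for z
    proof -
      have "zs[j := z] = take j zs @ z # drop (Suc j) zs" using l j by (simp add: upd_conv_take_nth_drop)
      then have "mset (zs[j := z]) = mset (z # r)" by (simp add: r_def)
      then show ?thesis using \<open>i\<close> lr unfolding i_def symmetric_mlin_def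
        by (metis length_Cons Suc_eq_plus1)
    qed
    have "continuous_map weak_star weak_star (\<lambda>z. At (z # r))"
    proof (rule cont_into_ws)
      fix \<psi> :: "'e dual"
      have "(\<lambda>z. blinfun_apply (At (z # r)) \<psi>) = (\<lambda>z. blinfun_apply z
          (Blinfun (\<lambda>x. ab_ext_scalar (\<lambda>ys. blinfun_apply \<psi> (A (x # ys))) r)))"
        using At_ap lr by simp
      then show "continuous_map weak_star euclideanreal (\<lambda>z. blinfun_apply (At (z # r)) \<psi>)"
        using cont_eval_ws by simp
    qed
    then show "continuous_map weak_star weak_star (\<lambda>z. At (zs[j := z]))" using eq by simp
  qed

  have ii_iv: "ii \<Longrightarrow> iv" unfolding ii_def iv_def using m2 by simp

  have iv_v: "iv \<Longrightarrow> v"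
    unfolding v_def
  proof (intro allI impI)
    fix zs :: "'a bidual list" assume "iv" and l: "length zs = m"
    then obtain a b r where zs: "zs = a # b # r" using m2
      by (metis One_nat_def Suc_1 Suc_le_length_iff)
    have lr: "length r + 2 = m" using l zs by simp
    have "At (b # a # r) = At (a # b # r)"
    proof (rule blinfun_eqI)
      fix \<psi> :: "'e dual"
      let ?D = "ab_ext_scalar (\<lambda>xs. blinfun_apply \<psi> (A xs))"
      define g where "g = (\<lambda>z. ?D (a # z # r))"
      define h where "h = (\<lambda>z. ?D (z # a # r))"
      have cg: "continuous_map weak_star euclideanreal g"
      proof -
        have "continuous_map weak_star weak_star (\<lambda>z. At ((a # b # r)[1 := z]))"
          using \<open>iv\<close> l zs unfolding iv_def by blast
        then have "continuous_map weak_star euclideanreal ((\<lambda>t. blinfun_apply t \<psi>) \<circ> (\<lambda>z. At (a # z # r)))"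
          using continuous_map_compose cont_eval_ws by fastforce
        moreover have "(\<lambda>t. blinfun_apply t \<psi>) \<circ> (\<lambda>z. At (a # z # r)) = g"
          using At_ap lr by (auto simp: g_def)
        ultimately show ?thesis by simp
      qed
      have ch: "continuous_map weak_star euclideanreal h"
      proof -
        have "h = (\<lambda>z. blinfun_apply z (Blinfun (\<lambda>x. ab_ext_scalar (\<lambda>ys. blinfun_apply \<psi> (A (x # ys))) (a # r))))"
          by (simp add: h_def)
        then show ?thesis using cont_eval_ws by simp
      qed
      have agree: "g (can_emb x) = h (can_emb x)" for x
        unfolding g_def h_def using swap_can[OF cD sD lr] .
      have "g b = h b"
      proof (rule ccontr)
        assume ne: "g b \<noteq> h b"
        have cd: "continuous_map weak_star euclideanreal (\<lambda>z. g z - h z)"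
          using cg ch by (rule continuous_map_diff)
        have op: "openin euclideanreal (- {0 :: real})" by (simp add: open_Compl)
        have "openin weak_star {z \<in> topspace weak_star. g z - h z \<in> - {0}}"
          by (rule openin_continuous_map_preimage[OF cd op])
        moreover have "b \<in> {z \<in> topspace weak_star. g z - h z \<in> - {0}}" using ne by (simp add: topspace_ws)
        ultimately obtain x where "can_emb x \<in> {z \<in> topspace weak_star. g z - h z \<in> - {0}}"
          using ws_dense by blast
        then show False using agree by simp
      qed
      then show "blinfun_apply (At (b # a # r)) \<psi> = blinfun_apply (At (a # b # r)) \<psi>"
        using At_ap lr by (simp add: g_def h_def)
    qed
    then show "At (zs ! 1 # zs ! 0 # drop 2 zs) = At zs" using zs by simp
  qed

  have i_iii: "i \<Longrightarrow> iii"
    unfolding iii_def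
  proof (intro allI impI)
    fix ws :: "'a bidual bidual list" assume "i" and l: "length ws = m"
    show "emb_transpose (Att ws) = At (map emb_transpose ws)"
    proof (rule blinfun_eqI)
      fix \<phi> :: "'e dual"
      let ?D = "ab_ext_scalar (\<lambda>xs. blinfun_apply \<phi> (A xs))"
      have "ab_ext_scalar ?D ws = ?D (map emb_transpose ws)"
      proof (rule lemT[OF l cabD sym_sc[OF \<open>i\<close>]], intro allI impI)
        fix z zs assume "length (zs :: 'a bidual list) + 1 = m"
        then show "?D (z # zs) = blinfun_apply z (Blinfun (\<lambda>x. ?D (can_emb x # zs)))" by (rule FC)
      qed
      then show "blinfun_apply (emb_transpose (Att ws)) \<phi> = blinfun_apply (At (map emb_transpose ws)) \<phi>"
        using iii_sc[OF l, of \<phi>] by simp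
    qed
  qed

  have iii_v: "iii \<Longrightarrow> v"
    unfolding v_def
  proof (intro allI impI)
    fix zs :: "'a bidual list" assume "iii" and l: "length zs = m"
    then obtain a b r where zs: "zs = a # b # r" using m2
      by (metis One_nat_def Suc_1 Suc_le_length_iff)
    have lr: "length r + 2 = m" using l zs by simp
    have "At (b # a # r) = At (a # b # r)"
    proof (rule blinfun_eqI)
      fix \<phi> :: "'e dual"
      let ?D = "ab_ext_scalar (\<lambda>xs. blinfun_apply \<phi> (A xs))"
      have sc: "ab_ext_scalar ?D ws = ?D (map emb_transpose ws)" if "length ws = m" for ws
        using iii_sc[OF that, of \<phi>] \<open>iii\<close> that unfolding iii_def by simp
      have cD2: "cont_mlin (Suc (Suc (length r))) ?D" using cabD lr by (simp add: numeral_2_eq_2)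
      have cD1: "cont_mlin (Suc (length r)) (\<lambda>ys. ?D (a # ys))" using cont_shift[OF cD2] .
      have blG: "bounded_linear (\<lambda>y. ?D (a # y # r))" using cont_bl_first[OF cD1] by simp
      define G where "G = Blinfun (\<lambda>y. ?D (a # y # r))"
      have Gap: "blinfun_apply G y = ?D (a # y # r)" for y
        unfolding G_def using bounded_linear_Blinfun_apply[OF blG] by simp
      have H: "\<forall>w :: 'a bidual bidual. blinfun_apply w G = blinfun_apply G (emb_transpose w)"
      proof
        fix w :: "'a bidual bidual"
        have c3: "cont_mlin (Suc (length (w # map can_emb r))) ?D" using cD2 by simp
        have "ab_ext_scalar ?D (can_emb a # w # map can_emb r) = ab_ext_scalar (\<lambda>ys. ?D (a # ys)) (w # map can_emb r)"
          using ab_can_first[OF c3] .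
        also have "\<dots> = blinfun_apply w (Blinfun (\<lambda>y. ab_ext_scalar (\<lambda>ys. ?D (a # y # ys)) (map can_emb r)))"
          by simp
        also have "(\<lambda>y. ab_ext_scalar (\<lambda>ys. ?D (a # y # ys)) (map can_emb r)) = (\<lambda>y. ?D (a # y # r))"
        proof
          fix y
          have "cont_mlin (length r) (\<lambda>ys. ?D (a # y # ys))" using cont_shift[OF cD1] by simp
          then show "ab_ext_scalar (\<lambda>ys. ?D (a # y # ys)) (map can_emb r) = ?D (a # y # r)"
            using ab_map_can by blast
        qed
        finally have "ab_ext_scalar ?D (can_emb a # w # map can_emb r) = blinfun_apply w G"
          by (simp add: G_def)
        moreover have "ab_ext_scalar ?D (can_emb a # w # map can_emb r) = ?D (a # emb_transpose w # r)"
          using sc[of "can_emb a # w # map can_emb r"] lr by (simp add: emb_transpose_can o_def)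
        ultimately show "blinfun_apply w G = blinfun_apply G (emb_transpose w)" by (simp add: Gap)
      qed
      have "?D (a # b # r) = blinfun_apply b (Blinfun (\<lambda>x. blinfun_apply G (can_emb x)))"
        using lemK[OF H, of b] by (simp add: Gap)
      also have "(\<lambda>x. blinfun_apply G (can_emb x)) = (\<lambda>x. ?D (can_emb x # a # r))"
        using swap_can[OF cD sD lr] by (simp add: Gap)
      also have "blinfun_apply b (Blinfun \<dots>) = ?D (b # a # r)"
        using FC[of "a # r" \<phi> b] lr by simp
      finally show "blinfun_apply (At (b # a # r)) \<phi> = blinfun_apply (At (a # b # r)) \<phi>"
        using At_ap lr by simp
    qed
    then show "At (zs ! 1 # zs ! 0 # drop 2 zs) = At zs" using zs by simp
  qed

  have "(i \<longleftrightarrow> ii) \<and> (i \<longleftrightarrow> iii) \<and> (i \<longleftrightarrow> iv) \<and> (i \<longleftrightarrow> v)"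
    using i_ii ii_iv iv_v v_i i_iii iii_v i_v by blast
  then show ?thesis unfolding Let_def i_def ii_def iii_def iv_def v_def .
qed

end
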